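(* Let $(X,x_0)$ be a pointed space, $n\geq1$, and let $\varphi:\mathcal{H}_n(X,x_0)\to\prod_{i\in\mathbb{N}}\pi_n(X,x_0)$ be the homomorphism $\varphi([f])=([f|_{S^n_1}],[f|_{S^n_2}],\dots)$. Then $\operatorname{Im}(\varphi)=L_n(X,x_0)$. In particular, $L_n(X,x_0)$ is a subgroup of $\prod_{i\in\mathbb{N}}\pi_n(X,x_0)$.
   Context: For $n\geq1$, the $n$-dimensional Hawaiian earring is $\mathbb{H}^n=\{(r_0,\dots,r_n)\in\mathbb{R}^{n+1} : (r_0-1/k)^2+\sum_{i=1}^n r_i^2=(1/k)^2 \text{ for some } k\in\mathbb{N}\}$ with base point $\theta=(0,\dots,0)$; $S^n_k$ denotes the $n$-sphere of radius $1/k$ in it, based at $\theta$. The $n$-Hawaiian group $\mathcal{H}_n(X,x_0)$ is the set of pointed homotopy classes (rel $\{\theta\}$) of continuous maps $f:(\mathbb{H}^n,\theta)\to(X,x_0)$, with group operation $[f][g]=[f\ast g]$, where $(f\ast g)|_{S^n_k}$ is the usual concatenation (as in $\pi_n$) of $f|_{S^n_k}$ and $g|_{S^n_k}$ for each $k$. A family of maps $\{f_i:(Y,y)\to(X,x_0)\}$ is null-convergent if for each open set $U\ni x_0$, $\operatorname{Im}(f_i)\subseteq U$ for all but finitely many $i$. $L_n(X,x_0)$ is the subset of $\prod_{i\in\mathbb{N}}\pi_n(X,x_0)$ consisting of all sequences $([f_i])_{i}$ of homotopy classes with representatives $f_i$ such that $\{f_i\}$ is null-convergent. *)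

theory Defs
  imports "HOL-Analysis.Analysis"
begin

text \<open>Points of R^(n+1) are functions nat => real vanishing at indices > n
  (the library's Euclidean_space (Suc n)); coordinate 0 is r_0.\<close>

definition sph_set :: "nat \<Rightarrow> nat \<Rightarrow> (nat \<Rightarrow> real) set" where
  "sph_set n k = {r \<in> topspace (Euclidean_space (Suc n)).
      (r 0 - 1 / real k)\<^sup>2 + (\<Sum>i\<in>{1..n}. (r i)\<^sup>2) = (1 / real k)\<^sup>2}"

definition sph :: "nat \<Rightarrow> nat \<Rightarrow> (nat \<Rightarrow> real) topology" where
  "sph n k = subtopology (Euclidean_space (Suc n)) (sph_set n k)"

definition hawaiian :: "nat \<Rightarrow> (nat \<Rightarrow> real) topology" where
  "hawaiian n = subtopology (Euclidean_space (Suc n)) (\<Union>k\<in>{1..}. sph_set n k)"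

definition theta :: "nat \<Rightarrow> real" where
  "theta = (\<lambda>i. 0)"

definition based_class :: "(nat \<Rightarrow> real) topology \<Rightarrow> 'a topology \<Rightarrow> 'a \<Rightarrow> ((nat \<Rightarrow> real) \<Rightarrow> 'a)
    \<Rightarrow> ((nat \<Rightarrow> real) \<Rightarrow> 'a) set" where
  "based_class Y X x0 f = {g. continuous_map Y X g \<and> g theta = x0 \<and>
      homotopic_with (\<lambda>h. h theta = x0) Y X f g}"

text \<open>pi_n(X,x0), modelled as pointed homotopy classes of based maps from the
  standard sphere S^n_1 (radius 1, based at theta).\<close>
definition pi_n :: "nat \<Rightarrow> 'a topology \<Rightarrow> 'a \<Rightarrow> ((nat \<Rightarrow> real) \<Rightarrow> 'a) set set" where
  "pi_n n X x0 = {based_class (sph n 1) X x0 g | g.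
      continuous_map (sph n 1) X g \<and> g theta = x0}"

definition hawaiian_group :: "nat \<Rightarrow> 'a topology \<Rightarrow> 'a \<Rightarrow> ((nat \<Rightarrow> real) \<Rightarrow> 'a) set set" where
  "hawaiian_group n X x0 = {based_class (hawaiian n) X x0 f | f.
      continuous_map (hawaiian n) X f \<and> f theta = x0}"

text \<open>The canonical identification S^n_1 -> S^n_k, x |-> x/k (fixes theta).\<close>
definition shrink :: "nat \<Rightarrow> (nat \<Rightarrow> real) \<Rightarrow> (nat \<Rightarrow> real)" where
  "shrink k x = (\<lambda>i. x i / real k)"

definition restr_class :: "nat \<Rightarrow> 'a topology \<Rightarrow> 'a \<Rightarrow> nat \<Rightarrow> ((nat \<Rightarrow> real) \<Rightarrow> 'a)
    \<Rightarrow> ((nat \<Rightarrow> real) \<Rightarrow> 'a) set" where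
  "restr_class n X x0 k f = based_class (sph n 1) X x0 (f \<circ> shrink k)"

text \<open>phi([f]) = ([f|S^n_1], [f|S^n_2], ...); sequence index i corresponds to S^n_(i+1).\<close>
definition phi :: "nat \<Rightarrow> 'a topology \<Rightarrow> 'a \<Rightarrow> ((nat \<Rightarrow> real) \<Rightarrow> 'a) set
    \<Rightarrow> (nat \<Rightarrow> ((nat \<Rightarrow> real) \<Rightarrow> 'a) set)" where
  "phi n X x0 F = (let f = (SOME f. f \<in> F) in (\<lambda>i. restr_class n X x0 (Suc i) f))"

definition null_convergent :: "(nat \<Rightarrow> real) topology \<Rightarrow> 'a topology \<Rightarrow> 'a
    \<Rightarrow> (nat \<Rightarrow> (nat \<Rightarrow> real) \<Rightarrow> 'a) \<Rightarrow> bool" where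
  "null_convergent Y X x0 fs \<longleftrightarrow>
     (\<forall>U. openin X U \<and> x0 \<in> U \<longrightarrow> finite {i. \<not> (fs i ` topspace Y \<subseteq> U)})"

definition L_n :: "nat \<Rightarrow> 'a topology \<Rightarrow> 'a \<Rightarrow> (nat \<Rightarrow> ((nat \<Rightarrow> real) \<Rightarrow> 'a) set) set" where
  "L_n n X x0 = {s. \<exists>fs. (\<forall>i. continuous_map (sph n 1) X (fs i) \<and> fs i theta = x0 \<and>
       s i = based_class (sph n 1) X x0 (fs i)) \<and> null_convergent (sph n 1) X x0 fs}"

end

theory Submission
  imports Defs
begin

definition Hs :: "nat \<Rightarrow> (nat \<Rightarrow> real) set" where
  "Hs n = (\<Union>k\<in>{1..}. sph_set n k)"

lemma E_top: "Euclidean_space m = top_of_set {x. \<forall>i\<ge>m. x i = 0}"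
  by (simp add: Euclidean_space_def euclidean_product_topology)

lemma sph_set_sub: "sph_set n k \<subseteq> topspace (Euclidean_space (Suc n))"
  unfolding sph_set_def by auto

lemma sph_top: "sph n k = top_of_set (sph_set n k)"
  unfolding sph_def E_top subtopology_subtopology
  using sph_set_sub[of n k] by (simp add: topspace_Euclidean_space Int_absorb1)

lemma haw_top: "hawaiian n = top_of_set (Hs n)"
  unfolding hawaiian_def E_top subtopology_subtopology Hs_def
  using sph_set_sub[of n] by (simp add: topspace_Euclidean_space Int_absorb1 UN_subset_iff)

lemma sph_mem: "x \<in> sph_set n k \<longleftrightarrow> (\<forall>i\<ge>Suc n. x i = 0) \<and>
   (x 0 - 1 / real k)\<^sup>2 + (\<Sum>i\<in>{1..n}. (x i)\<^sup>2) = (1 / real k)\<^sup>2"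
  unfolding sph_set_def topspace_Euclidean_space by auto

lemma theta_in: "theta \<in> sph_set n k"
  unfolding sph_mem theta_def by simp

lemma shrink_in:
  assumes "k \<ge> 1" "x \<in> sph_set n 1"
  shows "shrink k x \<in> sph_set n k"
proof -
  have k: "real k > 0" using assms by simp
  have e: "(x 0 - 1)\<^sup>2 + (\<Sum>i\<in>{1..n}. (x i)\<^sup>2) = 1" and z: "\<forall>i\<ge>Suc n. x i = 0"
    using assms(2) unfolding sph_mem by auto
  have "(x 0 / real k - 1 / real k)\<^sup>2 + (\<Sum>i\<in>{1..n}. (x i / real k)\<^sup>2)
      = ((x 0 - 1)\<^sup>2 + (\<Sum>i\<in>{1..n}. (x i)\<^sup>2)) / (real k)\<^sup>2"
    using k by (simp add: power_divide diff_divide_distrib[symmetric] sum_divide_distrib add_divide_distrib)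
  also have "\<dots> = (1 / real k)\<^sup>2" using e by (simp add: power_divide)
  finally show ?thesis unfolding sph_mem shrink_def using z by simp
qed

lemma scale_in:
  assumes "k \<ge> 1" "y \<in> sph_set n k"
  shows "(\<lambda>i. real k * y i) \<in> sph_set n 1"
proof -
  have k: "real k > 0" using assms by simp
  have e: "(y 0 - 1 / real k)\<^sup>2 + (\<Sum>i\<in>{1..n}. (y i)\<^sup>2) = (1 / real k)\<^sup>2" and z: "\<forall>i\<ge>Suc n. y i = 0"
    using assms(2) unfolding sph_mem by auto
  have "(real k * y 0 - 1)\<^sup>2 + (\<Sum>i\<in>{1..n}. (real k * y i)\<^sup>2)
      = (real k)\<^sup>2 * ((y 0 - 1 / real k)\<^sup>2 + (\<Sum>i\<in>{1..n}. (y i)\<^sup>2))"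
    using k by (simp add: power_mult_distrib sum_distrib_left algebra_simps power2_eq_square)
  also have "\<dots> = 1" using e k by (simp add: power_divide)
  finally show ?thesis unfolding sph_mem using z by simp
qed

lemma y0_bounds:
  assumes "k \<ge> 1" "y \<in> sph_set n k"
  shows "0 \<le> y 0" "y 0 \<le> 2 / real k"
proof -
  have k: "real k > 0" using assms by simp
  have e: "(y 0 - 1 / real k)\<^sup>2 + (\<Sum>i\<in>{1..n}. (y i)\<^sup>2) = (1 / real k)\<^sup>2"
    using assms(2) unfolding sph_mem by auto
  have "(\<Sum>i\<in>{1..n}. (y i)\<^sup>2) \<ge> 0" by (simp add: sum_nonneg)
  then have "(y 0 - 1 / real k)\<^sup>2 \<le> (1 / real k)\<^sup>2" using e by linarith
  then have "\<bar>y 0 - 1 / real k\<bar> \<le> 1 / real k" using k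
    by (metis abs_of_pos power2_le_imp_le abs_ge_zero power2_abs zero_less_divide_1_iff)
  then show "0 \<le> y 0" "y 0 \<le> 2 / real k" by (auto simp: abs_le_iff)
qed

lemma yi_bound:
  assumes "k \<ge> 1" "y \<in> sph_set n k"
  shows "\<bar>y i\<bar> \<le> 2 / real k"
proof -
  have k: "real k > 0" using assms by simp
  have e: "(y 0 - 1 / real k)\<^sup>2 + (\<Sum>i\<in>{1..n}. (y i)\<^sup>2) = (1 / real k)\<^sup>2" and z: "\<forall>i\<ge>Suc n. y i = 0"
    using assms(2) unfolding sph_mem by auto
  consider "i = 0" | "i \<in> {1..n}" | "i \<ge> Suc n" by fastforce
  then show ?thesis
  proof cases
    case 1 then show ?thesis using y0_bounds[OF assms] by simp
  next
    case 2
    have "(y i)\<^sup>2 \<le> (\<Sum>i\<in>{1..n}. (y i)\<^sup>2)" using 2 by (intro member_le_sum) auto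
    moreover have "(y 0 - 1 / real k)\<^sup>2 \<ge> 0" by simp
    ultimately have "(y i)\<^sup>2 \<le> (1 / real k)\<^sup>2" using e by linarith
    then have "\<bar>y i\<bar> \<le> 1 / real k" using k
      by (metis abs_of_pos power2_le_imp_le abs_ge_zero power2_abs zero_less_divide_1_iff)
    then show ?thesis using k by (smt (verit) divide_right_mono)
  next
    case 3 then show ?thesis using z k by simp
  qed
qed

lemma y0_pos:
  assumes "k \<ge> 1" "y \<in> sph_set n k" "y \<noteq> theta"
  shows "y 0 > 0"
proof (rule ccontr)
  assume "\<not> y 0 > 0"
  then have y0: "y 0 = 0" using y0_bounds[OF assms(1,2)] by simp
  have e: "(y 0 - 1 / real k)\<^sup>2 + (\<Sum>i\<in>{1..n}. (y i)\<^sup>2) = (1 / real k)\<^sup>2" and z: "\<forall>i\<ge>Suc n. y i = 0"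
    using assms(2) unfolding sph_mem by auto
  have "(\<Sum>i\<in>{1..n}. (y i)\<^sup>2) = 0" using e y0 by (simp add: power2_eq_square)
  then have "\<forall>i\<in>{1..n}. (y i)\<^sup>2 = 0" by (subst (asm) sum_nonneg_eq_0_iff) auto
  then have yi: "\<And>i. i \<in> {1..n} \<Longrightarrow> y i = 0" by simp
  have "y i = 0" for i
  proof (cases "i = 0")
    case True then show ?thesis using y0 by simp
  next
    case False
    show ?thesis
    proof (cases "i \<le> n")
      case True then show ?thesis using yi False by simp
    next
      case False then show ?thesis using z by simp
    qed
  qed
  then have "y = theta" unfolding theta_def by auto
  then show False using assms(3) by simp
qed

lemma sph_unique:
  assumes "j \<ge> 1" "k \<ge> 1" "y \<in> sph_set n j" "y \<in> sph_set n k" "y \<noteq> theta"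
  shows "j = k"
proof -
  have p: "y 0 > 0" using y0_pos assms by blast
  have ej: "(y 0 - 1 / real j)\<^sup>2 + (\<Sum>i\<in>{1..n}. (y i)\<^sup>2) = (1 / real j)\<^sup>2"
    and ek: "(y 0 - 1 / real k)\<^sup>2 + (\<Sum>i\<in>{1..n}. (y i)\<^sup>2) = (1 / real k)\<^sup>2"
    using assms(3,4) unfolding sph_mem by auto
  have "y 0 = 0 \<or> j = k"
    using ej ek by (simp add: power2_diff algebra_simps)
  then show ?thesis using p by auto
qed


lemma based_class_eq:
  assumes "homotopic_with (\<lambda>h. h theta = x0) Y X f g"
  shows "based_class Y X x0 f = based_class Y X x0 g"
  using assms unfolding based_class_def
  by (auto intro: homotopic_with_trans homotopic_with_symD)

lemma shrink_theta: "shrink k theta = theta"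
  by (simp add: shrink_def theta_def)

lemma coord_cont: "continuous_on S (\<lambda>x::nat\<Rightarrow>real. x i)"
  by (rule continuous_on_subset[OF continuous_on_product_coordinates]) simp

lemma shrink_cont:
  assumes "k \<ge> 1"
  shows "continuous_map (sph n 1) (hawaiian n) (shrink k)"
proof -
  have "continuous_on (sph_set n 1) (shrink k)"
    unfolding shrink_def
    by (intro continuous_on_coordinatewise_then_product continuous_intros coord_cont) (use assms in auto)
  moreover have "shrink k \<in> sph_set n 1 \<rightarrow> Hs n"
    using shrink_in[OF assms] assms unfolding Hs_def by blast
  ultimately show ?thesis unfolding sph_top haw_top by simp
qed

lemma scale_cont:
  assumes "k \<ge> 1"
  shows "continuous_map (top_of_set (sph_set n k)) (sph n 1) (\<lambda>y i. real k * y i)"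
proof -
  have "continuous_on (sph_set n k) (\<lambda>y i. real k * y i)"
    by (intro continuous_on_coordinatewise_then_product continuous_intros coord_cont)
  moreover have "(\<lambda>y i. real k * y i) \<in> sph_set n k \<rightarrow> sph_set n 1"
    using scale_in[OF assms] by blast
  ultimately show ?thesis unfolding sph_top by simp
qed

lemma phi_class:
  assumes f: "continuous_map (hawaiian n) X f" "f theta = x0"
  shows "phi n X x0 (based_class (hawaiian n) X x0 f) =
     (\<lambda>i. based_class (sph n 1) X x0 (f \<circ> shrink (Suc i)))"
proof -
  define g where "g = (SOME g. g \<in> based_class (hawaiian n) X x0 f)"
  have "f \<in> based_class (hawaiian n) X x0 f"
    using f unfolding based_class_def by simp
  then have "g \<in> based_class (hawaiian n) X x0 f"
    unfolding g_def by (rule someI[where P="\<lambda>g. g \<in> based_class (hawaiian n) X x0 f"])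
  then have h: "homotopic_with (\<lambda>h. h theta = x0) (hawaiian n) X f g"
    unfolding based_class_def by blast
  have "homotopic_with (\<lambda>h. h theta = x0) (sph n 1) X (f \<circ> shrink (Suc i)) (g \<circ> shrink (Suc i))" for i
    by (rule homotopic_with_compose_continuous_map_right[OF h shrink_cont])
       (auto simp: shrink_theta)
  then show ?thesis
    unfolding phi_def restr_class_def Let_def g_def[symmetric]
    by (auto intro!: ext based_class_eq[symmetric])
qed

lemma sph_closed: "closed (sph_set n k)"
proof -
  have "sph_set n k = topspace (Euclidean_space (Suc n)) \<inter>
     {r. (r 0 - 1 / real k)\<^sup>2 + (\<Sum>i\<in>{1..n}. (r i)\<^sup>2) = (\<lambda>r. (1 / real k)\<^sup>2) r}"
    unfolding sph_set_def by auto
  moreover have "closed (topspace (Euclidean_space (Suc n)))"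
    by (rule closedin_Euclidean_imp_closed[OF closedin_topspace])
  moreover have "closed {r::nat\<Rightarrow>real. (r 0 - 1 / real k)\<^sup>2 + (\<Sum>i\<in>{1..n}. (r i)\<^sup>2) = (\<lambda>r. (1 / real k)\<^sup>2) r}"
    by (intro closed_Collect_eq continuous_intros coord_cont)
  ultimately show ?thesis by auto
qed

lemma null_conv:
  assumes f: "continuous_map (hawaiian n) X f" "f theta = x0"
  shows "null_convergent (sph n 1) X x0 (\<lambda>i. f \<circ> shrink (Suc i))"
  unfolding null_convergent_def
proof (intro allI impI)
  fix U assume U: "openin X U \<and> x0 \<in> U"
  have "openin (top_of_set (Hs n)) {x \<in> Hs n. f x \<in> U}"
    using openin_continuous_map_preimage[OF f(1)] U unfolding haw_top by force
  moreover have th: "theta \<in> Hs n" unfolding Hs_def using theta_in by blast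
  ultimately obtain e where e: "e > 0" "\<And>y. y \<in> Hs n \<Longrightarrow> dist y theta < e \<Longrightarrow> f y \<in> U"
    using U f(2) unfolding openin_euclidean_subtopology_iff by blast
  obtain N where N: "(1/2::real)^N < e/2"
    using real_arch_pow_inv[of "e/2" "1/2::real"] e by auto
  obtain K :: nat where K: "real K > 8 / e" using reals_Archimedean2 by blast
  have Kpos: "real K > 0" using K e by (smt (verit) divide_pos_pos)
  have small: "4 / real K < e / 2" using K e Kpos by (simp add: field_simps)
  have "{i. \<not> ((f \<circ> shrink (Suc i)) ` topspace (sph n 1) \<subseteq> U)} \<subseteq> {..<K}"
  proof (rule subsetI, rule ccontr)
    fix i assume i: "i \<in> {i. \<not> ((f \<circ> shrink (Suc i)) ` topspace (sph n 1) \<subseteq> U)}" "i \<notin> {..<K}"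
    then obtain x where x: "x \<in> sph_set n 1" "f (shrink (Suc i) x) \<notin> U"
      unfolding sph_top by auto
    define y where "y = shrink (Suc i) x"
    have y: "y \<in> sph_set n (Suc i)" unfolding y_def by (rule shrink_in) (use x in auto)
    then have yH: "y \<in> Hs n" unfolding Hs_def by auto
    have "real K \<le> real (Suc i)" using i by simp
    then have b: "2 / real (Suc i) \<le> 2 / real K" using Kpos by (simp add: frac_le)
    have "\<forall>m. dist (y (from_nat m)) (theta (from_nat m)) \<le> 2 / real K"
      using yi_bound[OF _ y] b by (auto simp: dist_real_def theta_def intro: order_trans)
    then have "Max {dist (y (from_nat m)) (theta (from_nat m)) |m. m \<le> N} \<le> 2 / real K"
      by (intro Max.boundedI) auto
    then have "dist y theta < e"
      using dist_fun_le_dist_first_terms[of y theta N] N small by linarith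
    then have "f y \<in> U" using e yH by blast
    then show False using x unfolding y_def by simp
  qed
  then show "finite {i. \<not> ((f \<circ> shrink (Suc i)) ` topspace (sph n 1) \<subseteq> U)}"
    using finite_subset by blast
qed

lemma glue_cont:
  assumes fs: "\<And>i. continuous_map (sph n 1) X (fs i)" "\<And>i. fs i theta = x0"
    and nc: "null_convergent (sph n 1) X x0 fs"
    and fval: "\<And>j y. j \<ge> 1 \<Longrightarrow> y \<in> sph_set n j \<Longrightarrow> f y = fs (j - 1) (\<lambda>i. real j * y i)"
    and ftheta: "f theta = x0"
  shows "continuous_map (hawaiian n) X f"
proof -
  have img: "f y \<in> topspace X" if "y \<in> Hs n" for y
  proof -
    have "y \<in> (\<Union>k\<in>{1..}. sph_set n k)" using that by (simp only: Hs_def)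
    then obtain j where j0: "j \<in> {1..}" "y \<in> sph_set n j" by blast
    then have j: "j \<ge> 1" "y \<in> sph_set n j" by auto
    have "(\<lambda>i. real j * y i) \<in> topspace (sph n 1)" using scale_in[OF j] unfolding sph_top by simp
    then show ?thesis using fval[OF j] continuous_map_image_subset_topspace[OF fs(1)] by auto
  qed
  define D where "D U j = {y \<in> sph_set n j. f y \<notin> U}" for U j
  have Dcl: "closedin (top_of_set (Hs n)) (D U j)" if "openin X U" "j \<ge> 1" for U j
  proof -
    have gc: "continuous_map (top_of_set (sph_set n j)) X (fs (j - 1) \<circ> (\<lambda>y i. real j * y i))"
      by (rule continuous_map_compose[OF scale_cont[OF that(2)] fs(1)])
    have "closedin (top_of_set (sph_set n j))
       {y \<in> topspace (top_of_set (sph_set n j)). (fs (j - 1) \<circ> (\<lambda>y i. real j * y i)) y \<in> topspace X - U}"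
      by (rule closedin_continuous_map_preimage[OF gc]) (use that in auto)
    moreover have "{y \<in> topspace (top_of_set (sph_set n j)). (fs (j - 1) \<circ> (\<lambda>y i. real j * y i)) y \<in> topspace X - U}
        = D U j"
    proof -
      have sub: "sph_set n j \<subseteq> Hs n" using that(2) unfolding Hs_def by auto
      have "\<forall>y\<in>sph_set n j. f y \<in> topspace X" using img sub by blast
      then show ?thesis unfolding D_def using fval[OF that(2)] by auto
    qed
    moreover have "closedin (top_of_set (Hs n)) (sph_set n j)"
      by (rule closed_subset[OF _ sph_closed]) (use that in \<open>auto simp: Hs_def\<close>)
    ultimately show ?thesis using closedin_trans by metis
  qed
  have DU: "closedin (top_of_set (Hs n)) (\<Union>j\<in>J. D U j)" if "openin X U" "finite J" "\<forall>j\<in>J. j \<ge> 1" for U J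
    using that by (intro closedin_Union) (auto intro: Dcl)
  have "openin (top_of_set (Hs n)) {x \<in> Hs n. f x \<in> U}" if U: "openin X U" for U
  proof (subst openin_subopen, intro ballI)
    fix p assume p: "p \<in> {x \<in> Hs n. f x \<in> U}"
    show "\<exists>T. openin (top_of_set (Hs n)) T \<and> p \<in> T \<and> T \<subseteq> {x \<in> Hs n. f x \<in> U}"
    proof (cases "p = theta")
      case True
      then have x0U: "x0 \<in> U" using p ftheta by simp
      define B where "B = {i. \<not> (fs i ` topspace (sph n 1) \<subseteq> U)}"
      have Bf: "finite B" using nc U x0U unfolding null_convergent_def B_def by blast
      define T where "T = Hs n - (\<Union>j\<in>Suc ` B. D U j)"
      have "openin (top_of_set (Hs n)) T"
        unfolding T_def by (intro openin_diff openin_subtopology_self DU U) (use Bf in auto)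
      moreover have "p \<in> T" using p unfolding T_def D_def by auto
      moreover have "T \<subseteq> {x \<in> Hs n. f x \<in> U}"
      proof
        fix y assume y: "y \<in> T"
        then have "y \<in> Hs n" unfolding T_def by blast
        then obtain j where j: "j \<ge> 1" "y \<in> sph_set n j" unfolding Hs_def by auto
        show "y \<in> {x \<in> Hs n. f x \<in> U}"
        proof (cases "j - 1 \<in> B")
          case True
          then have "j \<in> Suc ` B" using j by (metis Suc_diff_1 image_eqI less_le_trans zero_less_one)
          then show ?thesis using y j unfolding T_def D_def by auto
        next
          case False
          have "(\<lambda>i. real j * y i) \<in> topspace (sph n 1)" using scale_in[OF j] unfolding sph_top by simp
          then show ?thesis using False fval[OF j] y unfolding B_def T_def by auto
        qed
      qed
      ultimately show ?thesis by blast
    next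
      case False
      obtain k where k: "k \<ge> 1" "p \<in> sph_set n k" using p unfolding Hs_def by auto
      have p0: "p 0 > 0" using y0_pos[OF k False] .
      define J where "J = {j. 1 \<le> j \<and> real j \<le> 4 / p 0}"
      obtain NN :: nat where NN: "4 / p 0 < real NN" using reals_Archimedean2 by blast
      have "J \<subseteq> {..NN}"
      proof
        fix x assume "x \<in> J"
        then have "real x < real NN" using NN unfolding J_def by auto
        then show "x \<in> {..NN}" by simp
      qed
      then have Jf: "finite J" using finite_subset by blast
      define T where "T = (Hs n \<inter> {y. p 0 / 2 < y 0}) - (\<Union>j\<in>J. D U j)"
      have "open {y::nat\<Rightarrow>real. p 0 / 2 < y 0}"
        by (intro open_Collect_less continuous_intros coord_cont)
      then have "openin (top_of_set (Hs n)) (Hs n \<inter> {y. p 0 / 2 < y 0})" by blast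
      then have "openin (top_of_set (Hs n)) T"
        unfolding T_def by (intro openin_diff DU U Jf) (auto simp: J_def)
      moreover have "p \<in> T" using p p0 unfolding T_def D_def by auto
      moreover have "T \<subseteq> {x \<in> Hs n. f x \<in> U}"
      proof
        fix y assume y: "y \<in> T"
        then have "y \<in> Hs n" unfolding T_def by blast
        then obtain j where j: "j \<ge> 1" "y \<in> sph_set n j" unfolding Hs_def by auto
        have "y 0 \<le> 2 / real j" using y0_bounds[OF j] by simp
        moreover have "p 0 / 2 < y 0" using y unfolding T_def by auto
        ultimately have "p 0 / 2 < 2 / real j" by linarith
        then have "real j * p 0 < 4" using j by (simp add: field_simps)
        then have "real j \<le> 4 / p 0" using p0 by (simp add: field_simps)
        then have "j \<in> J" using j unfolding J_def by auto
        then show "y \<in> {x \<in> Hs n. f x \<in> U}" using y j unfolding T_def D_def by auto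
      qed
      ultimately show ?thesis by blast
    qed
  qed
  then show ?thesis
    unfolding continuous_map_def haw_top using img by auto
qed

theorem theorem2p7:
  fixes X :: "'a topology" and x0 :: 'a and n :: nat
  assumes "n \<ge> 1" and "x0 \<in> topspace X"
  shows "phi n X x0 ` hawaiian_group n X x0 = L_n n X x0"
proof
  show "phi n X x0 ` hawaiian_group n X x0 \<subseteq> L_n n X x0"
  proof
    fix s assume "s \<in> phi n X x0 ` hawaiian_group n X x0"
    then obtain f where f: "continuous_map (hawaiian n) X f" "f theta = x0"
      and s: "s = phi n X x0 (based_class (hawaiian n) X x0 f)"
      unfolding hawaiian_group_def by auto
    have s': "s = (\<lambda>i. based_class (sph n 1) X x0 (f \<circ> shrink (Suc i)))"
      using s phi_class[OF f] by simp
    show "s \<in> L_n n X x0"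
      unfolding L_n_def
    proof (intro CollectI exI[of _ "\<lambda>i. f \<circ> shrink (Suc i)"] conjI allI)
      fix i
      show "continuous_map (sph n 1) X (f \<circ> shrink (Suc i))"
        by (rule continuous_map_compose[OF shrink_cont f(1)]) simp
      show "(f \<circ> shrink (Suc i)) theta = x0" using f(2) by (simp add: shrink_theta)
      show "s i = based_class (sph n 1) X x0 (f \<circ> shrink (Suc i))" using s' by simp
    next
      show "null_convergent (sph n 1) X x0 (\<lambda>i. f \<circ> shrink (Suc i))" by (rule null_conv[OF f])
    qed
  qed
next
  show "L_n n X x0 \<subseteq> phi n X x0 ` hawaiian_group n X x0"
  proof
    fix s assume "s \<in> L_n n X x0"
    then obtain fs where fs: "\<And>i. continuous_map (sph n 1) X (fs i)" "\<And>i. fs i theta = x0"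
      "\<And>i. s i = based_class (sph n 1) X x0 (fs i)" and nc: "null_convergent (sph n 1) X x0 fs"
      unfolding L_n_def by blast
    define kidx where "kidx y = (SOME k. k \<ge> 1 \<and> y \<in> sph_set n k)" for y
    define f where "f y = fs (kidx y - 1) (\<lambda>i. real (kidx y) * y i)" for y
    have sc0: "(\<lambda>i. c * theta i) = theta" for c :: real by (simp add: theta_def)
    have fval: "f y = fs (j - 1) (\<lambda>i. real j * y i)" if j: "j \<ge> 1" "y \<in> sph_set n j" for j y
    proof -
      have kk: "kidx y \<ge> 1 \<and> y \<in> sph_set n (kidx y)"
        unfolding kidx_def by (rule someI[where P="\<lambda>k. k \<ge> 1 \<and> y \<in> sph_set n k"]) (use j in blast)
      show ?thesis
      proof (cases "y = theta")
        case True then show ?thesis unfolding f_def using sc0 fs(2) by simp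
      next
        case False
        then have "kidx y = j" using sph_unique[of "kidx y" j y n] kk j by blast
        then show ?thesis unfolding f_def by simp
      qed
    qed
    have ftheta: "f theta = x0" using fval[of 1 theta] theta_in sc0 fs(2) by simp
    have fc: "continuous_map (hawaiian n) X f"
      by (rule glue_cont[OF fs(1,2) nc fval ftheta])
    have "based_class (hawaiian n) X x0 f \<in> hawaiian_group n X x0"
      unfolding hawaiian_group_def using fc ftheta by blast
    moreover have "phi n X x0 (based_class (hawaiian n) X x0 f) = s"
    proof -
      have "based_class (sph n 1) X x0 (f \<circ> shrink (Suc i)) = s i" for i
      proof -
        have "homotopic_with (\<lambda>h. h theta = x0) (sph n 1) X (f \<circ> shrink (Suc i)) (fs i)"
        proof (rule homotopic_with_equal)
          show "(f \<circ> shrink (Suc i)) theta = x0" using ftheta by (simp add: shrink_theta)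
          show "fs i theta = x0" by (rule fs(2))
          show "continuous_map (sph n 1) X (f \<circ> shrink (Suc i))"
            by (rule continuous_map_compose[OF shrink_cont fc]) simp
        next
          fix x assume "x \<in> topspace (sph n 1)"
          then have x: "x \<in> sph_set n 1" unfolding sph_top by simp
          have "f (shrink (Suc i) x) = fs i (\<lambda>m. real (Suc i) * shrink (Suc i) x m)"
            using fval[of "Suc i" "shrink (Suc i) x"] shrink_in[OF _ x, of "Suc i"] by simp
          also have "(\<lambda>m. real (Suc i) * shrink (Suc i) x m) = x"
            by (simp add: shrink_def del: of_nat_Suc)
          finally show "(f \<circ> shrink (Suc i)) x = fs i x" by simp
        qed
        then show ?thesis using based_class_eq fs(3) by metis
      qed
      then show ?thesis using phi_class[OF fc ftheta] by auto
    qed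
    ultimately show "s \<in> phi n X x0 ` hawaiian_group n X x0" by (metis image_eqI)
  qed
qed

end
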